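(* Let $B$ be a log-product expression of degree $n\geq 2$. Then there are homogeneous expressions $X$ and $Y$ such that $B\equiv X\cdot Y$ and $n/3 \leq \deg X \le 2n/3$ and $n/3\le \deg Y \leq 2n/3$.
   Context: Regular expressions (without star, without $\emptyset$) are built from $\epsilon$ and letters by union and concatenation; $R\equiv R'$ means they describe the same language. A homogeneous expression describes a language all of whose words have the same length, its degree $\deg R$. A homogeneous expression $B$ is log-product if it is a letter, or there are homogeneous expressions $B_1,B_2$ with $B_1$ log-product, $\deg B_1\ge\deg B_2$ and $B=B_1B_2$ or $B=B_2B_1$. *)

theory Defs
  imports Complex_Main
begin

datatype 'a sfre = Eps | Lit 'a | Plus "'a sfre" "'a sfre" | Times "'a sfre" "'a sfre"

fun lang :: "'a sfre \<Rightarrow> 'a list set" where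
  "lang Eps = {[]}"
| "lang (Lit a) = {[a]}"
| "lang (Plus r s) = lang r \<union> lang s"
| "lang (Times r s) = {u @ v | u v. u \<in> lang r \<and> v \<in> lang s}"

definition req :: "'a sfre \<Rightarrow> 'a sfre \<Rightarrow> bool" (infix "\<equiv>\<^sub>r" 50) where
  "r \<equiv>\<^sub>r s \<longleftrightarrow> lang r = lang s"

definition homogeneous :: "'a sfre \<Rightarrow> bool" where
  "homogeneous r \<longleftrightarrow> (\<exists>n. \<forall>w \<in> lang r. length w = n)"

text \<open>Degree: the common length of the words (languages are never empty).\<close>
definition deg :: "'a sfre \<Rightarrow> nat" where
  "deg r = length (SOME w. w \<in> lang r)"

inductive log_product :: "'a sfre \<Rightarrow> bool" where
  lp_lit: "log_product (Lit a)"
| lp_left: "\<lbrakk>log_product B1; homogeneous B2; deg B1 \<ge> deg B2\<rbrakk> \<Longrightarrow> log_product (Times B1 B2)"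
| lp_right: "\<lbrakk>log_product B1; homogeneous B2; deg B1 \<ge> deg B2\<rbrakk> \<Longrightarrow> log_product (Times B2 B1)"

end

theory Submission
  imports Defs
begin

lemma lang_ne: "lang r \<noteq> {}"
  by (induction r) auto

lemma deg_hom: "homogeneous r \<Longrightarrow> w \<in> lang r \<Longrightarrow> length w = deg r"
  unfolding homogeneous_def deg_def
  by (metis lang_ne some_in_eq)

lemma hom_Times: "homogeneous r \<Longrightarrow> homogeneous s \<Longrightarrow> homogeneous (Times r s)"
  unfolding homogeneous_def by fastforce

lemma deg_Times: "homogeneous r \<Longrightarrow> homogeneous s \<Longrightarrow> deg (Times r s) = deg r + deg s"
proof -
  assume h: "homogeneous r" "homogeneous s"
  obtain u v where uv: "u \<in> lang r" "v \<in> lang s" using lang_ne by blast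
  have "u @ v \<in> lang (Times r s)" using uv by auto
  hence "length (u @ v) = deg (Times r s)" using deg_hom hom_Times h by blast
  moreover have "length u = deg r" "length v = deg s" using uv h deg_hom by blast+
  ultimately show ?thesis by simp
qed

lemma deg_Eps: "deg Eps = 0" unfolding deg_def by simp

lemma hom_Eps: "homogeneous Eps" unfolding homogeneous_def by simp

lemma lp_hom: "log_product B \<Longrightarrow> homogeneous B"
  by (induction rule: log_product.induct) (auto simp: hom_Times homogeneous_def)

lemma lang_assoc: "lang (Times a (Times b c)) = lang (Times (Times a b) c)"
proof (intro set_eqI iffI)
  fix w assume "w \<in> lang (Times a (Times b c))"
  then obtain u v x where "w = u @ v @ x" "u \<in> lang a" "v \<in> lang b" "x \<in> lang c" by auto
  hence "w = (u @ v) @ x" "u @ v \<in> lang (Times a b)" by auto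
  hence "\<exists>p q. w = p @ q \<and> p \<in> lang (Times a b) \<and> q \<in> lang c" using \<open>x \<in> lang c\<close> by blast
  thus "w \<in> lang (Times (Times a b) c)" by (simp only: lang.simps(4) mem_Collect_eq)
next
  fix w assume "w \<in> lang (Times (Times a b) c)"
  then obtain u v x where "w = (u @ v) @ x" "u \<in> lang a" "v \<in> lang b" "x \<in> lang c" by auto
  hence "w = u @ (v @ x)" "v @ x \<in> lang (Times b c)" by auto
  hence "\<exists>p q. w = p @ q \<and> p \<in> lang a \<and> q \<in> lang (Times b c)" using \<open>u \<in> lang a\<close> by blast
  thus "w \<in> lang (Times a (Times b c))" by (simp only: lang.simps(4) mem_Collect_eq)
qed

lemma lang4: "lang (Times L (Times (Times a b) R)) = lang (Times (Times L a) (Times b R))"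
proof -
  have "lang (Times (Times a b) R) = lang (Times a (Times b R))" by (rule lang_assoc[symmetric])
  hence "lang (Times L (Times (Times a b) R)) = lang (Times L (Times a (Times b R)))"
    by (simp only: lang.simps)
  also have "\<dots> = lang (Times (Times L a) (Times b R))" by (rule lang_assoc)
  finally show ?thesis .
qed

lemma main:
  assumes "log_product C"
  shows "homogeneous L \<Longrightarrow> homogeneous R \<Longrightarrow> 3 * deg L < N \<Longrightarrow> 3 * (deg L + deg C) > 2 * N
   \<Longrightarrow> N = deg L + deg C + deg R \<Longrightarrow> N \<ge> 2 \<Longrightarrow>
   \<exists>X Y. homogeneous X \<and> homogeneous Y \<and> lang (Times L (Times C R)) = lang (Times X Y) \<and>
     N \<le> 3 * deg X \<and> 3 * deg X \<le> 2 * N \<and> N \<le> 3 * deg Y \<and> 3 * deg Y \<le> 2 * N"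
  using assms
proof (induction arbitrary: L R N rule: log_product.induct)
  case (lp_lit a)
  have "deg (Lit a) = 1" unfolding deg_def by simp
  thus ?case using lp_lit by simp
next
  case (lp_left C1 C2)
  have h1: "homogeneous C1" using \<open>log_product C1\<close> lp_hom by blast
  have dC: "deg (Times C1 C2) = deg C1 + deg C2" using h1 \<open>homogeneous C2\<close> deg_Times by blast
  show ?case
  proof (cases "3 * (deg L + deg C1) > 2 * N")
    case True
    have hR: "homogeneous (Times C2 R)" using lp_left.prems(2) \<open>homogeneous C2\<close> hom_Times by blast
    have dR: "deg (Times C2 R) = deg C2 + deg R" using lp_left.prems(2) \<open>homogeneous C2\<close> deg_Times by blast
    obtain X Y where XY: "homogeneous X \<and> homogeneous Y \<and> lang (Times L (Times C1 (Times C2 R))) = lang (Times X Y) \<and>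
     N \<le> 3 * deg X \<and> 3 * deg X \<le> 2 * N \<and> N \<le> 3 * deg Y \<and> 3 * deg Y \<le> 2 * N"
    proof -
      have "N = deg L + deg C1 + deg (Times C2 R)" using lp_left.prems(5) dR dC by simp
      from lp_left.IH[OF lp_left.prems(1) hR lp_left.prems(3) True this lp_left.prems(6)]
      show ?thesis using that by blast
    qed
    have "lang (Times C1 (Times C2 R)) = lang (Times (Times C1 C2) R)" by (rule lang_assoc)
    hence eq: "lang (Times L (Times C1 (Times C2 R))) = lang (Times L (Times (Times C1 C2) R))"
      by (simp only: lang.simps)
    have l: "lang (Times L (Times (Times C1 C2) R)) = lang (Times X Y)"
      unfolding eq[symmetric] using XY by (elim conjE) assumption
    show ?thesis apply (rule exI[of _ X], rule exI[of _ Y]) using XY l by (elim conjE) (intro conjI; assumption)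
  next
    case False
    have "N \<le> 3 * (deg L + deg C1)" using False lp_left.prems(3,4,5) dC \<open>deg C2 \<le> deg C1\<close> unfolding distrib_left by linarith
    moreover have "homogeneous (Times L C1)" "homogeneous (Times C2 R)"
      using lp_left.prems(1,2) h1 \<open>homogeneous C2\<close> hom_Times by blast+
    moreover have "deg (Times L C1) = deg L + deg C1" "deg (Times C2 R) = deg C2 + deg R"
      using lp_left.prems(1,2) h1 \<open>homogeneous C2\<close> deg_Times by blast+
    moreover have "lang (Times L (Times (Times C1 C2) R)) = lang (Times (Times L C1) (Times C2 R))"
      by (rule lang4)
    moreover have "N = deg L + deg C1 + deg C2 + deg R" using lp_left.prems(5) dC by simp
    ultimately show ?thesis using False lp_left.prems(3)
      by (intro exI[of _ "Times L C1"] exI[of _ "Times C2 R"] conjI) simp_all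
  qed
next
  case (lp_right C1 C2)
  have h1: "homogeneous C1" using \<open>log_product C1\<close> lp_hom by blast
  have dC: "deg (Times C2 C1) = deg C2 + deg C1" using h1 \<open>homogeneous C2\<close> deg_Times by blast
  show ?case
  proof (cases "3 * (deg L + deg C2) < N")
    case True
    have hL: "homogeneous (Times L C2)" using lp_right.prems(1) \<open>homogeneous C2\<close> hom_Times by blast
    have dL: "deg (Times L C2) = deg L + deg C2" using lp_right.prems(1) \<open>homogeneous C2\<close> deg_Times by blast
    obtain X Y where XY: "homogeneous X \<and> homogeneous Y \<and> lang (Times (Times L C2) (Times C1 R)) = lang (Times X Y) \<and>
     N \<le> 3 * deg X \<and> 3 * deg X \<le> 2 * N \<and> N \<le> 3 * deg Y \<and> 3 * deg Y \<le> 2 * N"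
    proof -
      have a: "3 * deg (Times L C2) < N" using True dL by simp
      have b: "2 * N < 3 * (deg (Times L C2) + deg C1)" using lp_right.prems(4) dL dC by simp
      have c: "N = deg (Times L C2) + deg C1 + deg R" using lp_right.prems(5) dL dC by simp
      from lp_right.IH[OF hL lp_right.prems(2) a b c lp_right.prems(6)]
      show ?thesis using that by blast
    qed
    have eq: "lang (Times (Times L C2) (Times C1 R)) = lang (Times L (Times (Times C2 C1) R))"
      by (rule lang4[symmetric])
    have l: "lang (Times L (Times (Times C2 C1) R)) = lang (Times X Y)"
      unfolding eq[symmetric] using XY by (elim conjE) assumption
    show ?thesis apply (rule exI[of _ X], rule exI[of _ Y]) using XY l by (elim conjE) (intro conjI; assumption)
  next
    case False
    have "3 * (deg L + deg C2) \<le> 2 * N" using False lp_right.prems(3,4,5) dC \<open>deg C2 \<le> deg C1\<close> unfolding distrib_left by linarith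
    moreover have "homogeneous (Times L C2)" "homogeneous (Times C1 R)"
      using lp_right.prems(1,2) h1 \<open>homogeneous C2\<close> hom_Times by blast+
    moreover have "deg (Times L C2) = deg L + deg C2" "deg (Times C1 R) = deg C1 + deg R"
      using lp_right.prems(1,2) h1 \<open>homogeneous C2\<close> deg_Times by blast+
    moreover have "lang (Times L (Times (Times C2 C1) R)) = lang (Times (Times L C2) (Times C1 R))"
      by (rule lang4)
    moreover have "N = deg L + deg C2 + deg C1 + deg R" using lp_right.prems(5) dC by simp
    ultimately show ?thesis using False lp_right.prems(3)
      by (intro exI[of _ "Times L C2"] exI[of _ "Times C1 R"] conjI) simp_all
  qed
qed

theorem proposition6p8:
  fixes B :: "'a sfre"
  assumes "log_product B" and "deg B \<ge> 2"
  shows "\<exists>X Y. homogeneous X \<and> homogeneous Y \<and> B \<equiv>\<^sub>r Times X Y \<and>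
           real (deg B) / 3 \<le> real (deg X) \<and> real (deg X) \<le> 2 * real (deg B) / 3 \<and>
           real (deg B) / 3 \<le> real (deg Y) \<and> real (deg Y) \<le> 2 * real (deg B) / 3"
proof -
  obtain X Y where XY: "homogeneous X \<and> homogeneous Y \<and> lang (Times Eps (Times B Eps)) = lang (Times X Y) \<and>
     deg B \<le> 3 * deg X \<and> 3 * deg X \<le> 2 * deg B \<and> deg B \<le> 3 * deg Y \<and> 3 * deg Y \<le> 2 * deg B"
  proof -
    have a: "3 * deg (Eps::'a sfre) < deg B" "2 * deg B < 3 * (deg (Eps::'a sfre) + deg B)"
      "deg B = deg (Eps::'a sfre) + deg B + deg (Eps::'a sfre)" using assms(2) by (simp_all add: deg_Eps)
    from main[OF assms(1) hom_Eps hom_Eps a assms(2)] show ?thesis using that by blast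
  qed
  have "lang (Times Eps (Times B Eps)) = lang B" by auto
  hence "B \<equiv>\<^sub>r Times X Y" using XY by (simp add: req_def)
  moreover have "real (deg B) \<le> 3 * real (deg X)" "3 * real (deg X) \<le> 2 * real (deg B)"
    "real (deg B) \<le> 3 * real (deg Y)" "3 * real (deg Y) \<le> 2 * real (deg B)"
    using XY by linarith+
  ultimately show ?thesis using XY by (intro exI[of _ X] exI[of _ Y]) auto
qed

end
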